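(* Let $G$ be a connected finite simple graph with maximum degree $\Delta$. Then there exists an edge $e$ of $G$ with $|F(e)|=\Delta^2-1$ if and only if $G\in\mathcal{G}_\Delta$.
   Context: $N(w)$ is the open neighborhood of a vertex $w$. Two distinct edges $e,f$ are $1$-neighbors if they share an endvertex, and $2$-neighbors if they share no endvertex but some edge of $G$ shares an endvertex with each of them. $N(e)$ is the set of $1$-neighbors of $e$. For a $2$-neighbor $f=xy$ of $e=uv$, let $c(e,f)$ be the number of edges of $G$ joining a vertex of $\{u,v\}$ to a vertex of $\{x,y\}$. The $2$-neighbor $f$ is of Type 6 (relative to $e$) if $c(e,f)=1$; $T_6(e)$ is the set of such $f$. $F(e)=N(e)\cup(N^2(e)\setminus T_6(e))$, where $N^2(e)$ is the set of all $2$-neighbors of $e$; i.e. $F(e)$ consists of the $1$-neighbors of $e$ together with those $2$-neighbors $f$ of $e$ that are joined to $e$ by at least two edges. For a positive integer $p$, $\mathcal{G}_p$ is the family of $p$-regular graphs on $2p$ vertices containing an edge $uv$ with $N(u)\cup N(v)=V(G)$. *)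

theory Defs
  imports Main
begin

definition simple_graph :: "'a set \<Rightarrow> 'a set set \<Rightarrow> bool" where
  "simple_graph V E \<longleftrightarrow> finite V \<and> (\<forall>e\<in>E. e \<subseteq> V \<and> card e = 2)"

definition nbhd :: "'a set set \<Rightarrow> 'a \<Rightarrow> 'a set" where
  "nbhd E w = {u. {u, w} \<in> E}"

definition degree :: "'a set set \<Rightarrow> 'a \<Rightarrow> nat" where
  "degree E w = card (nbhd E w)"

definition max_degree :: "'a set \<Rightarrow> 'a set set \<Rightarrow> nat" where
  "max_degree V E = Max (degree E ` V)"

definition adj :: "'a set set \<Rightarrow> 'a \<Rightarrow> 'a \<Rightarrow> bool" where
  "adj E u v \<longleftrightarrow> {u, v} \<in> E"

definition connected_graph :: "'a set \<Rightarrow> 'a set set \<Rightarrow> bool" where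
  "connected_graph V E \<longleftrightarrow> V \<noteq> {} \<and> (\<forall>u\<in>V. \<forall>v\<in>V. (adj E)\<^sup>*\<^sup>* u v)"

definition edge_nbrs1 :: "'a set set \<Rightarrow> 'a set \<Rightarrow> 'a set set" where
  "edge_nbrs1 E e = {f\<in>E. f \<noteq> e \<and> f \<inter> e \<noteq> {}}"

definition edge_nbrs2 :: "'a set set \<Rightarrow> 'a set \<Rightarrow> 'a set set" where
  "edge_nbrs2 E e = {f\<in>E. f \<noteq> e \<and> f \<inter> e = {} \<and> (\<exists>g\<in>E. g \<inter> e \<noteq> {} \<and> g \<inter> f \<noteq> {})}"

definition conn_count :: "'a set set \<Rightarrow> 'a set \<Rightarrow> 'a set \<Rightarrow> nat" where
  "conn_count E e f = card {g\<in>E. \<exists>a\<in>e. \<exists>b\<in>f. g = {a, b}}"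

definition type6 :: "'a set set \<Rightarrow> 'a set \<Rightarrow> 'a set set" where
  "type6 E e = {f\<in>edge_nbrs2 E e. conn_count E e f = 1}"

definition Fset :: "'a set set \<Rightarrow> 'a set \<Rightarrow> 'a set set" where
  "Fset E e = edge_nbrs1 E e \<union> (edge_nbrs2 E e - type6 E e)"

definition family_G :: "nat \<Rightarrow> 'a set \<Rightarrow> 'a set set \<Rightarrow> bool" where
  "family_G p V E \<longleftrightarrow> p > 0 \<and> simple_graph V E \<and> (\<forall>w\<in>V. degree E w = p) \<and> card V = 2 * p
     \<and> (\<exists>u v. {u, v} \<in> E \<and> nbhd E u \<union> nbhd E v = V)"

end

theory Submission
  imports Defs
begin

locale L =
  fixes V :: "'a set" and E :: "'a set set" and u v :: 'a and D :: nat
  assumes sg: "simple_graph V E" and ed: "{u,v} \<in> E"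
    and degb: "\<And>w. w\<in>V \<Longrightarrow> degree E w \<le> D"
begin

definition "N1 = edge_nbrs1 E {u,v}"
definition "F2 = edge_nbrs2 E {u,v} - type6 E {u,v}"
definition "C f = {g\<in>E. \<exists>a\<in>{u,v}. \<exists>b\<in>f. g = {a,b}}"
definition "Ed b = {f\<in>E. b\<in>f}"
definition "T g = {f\<in>E. f\<inter>{u,v}={} \<and> f\<inter>g\<noteq>{}}"
definition "S = {(g,f). f\<in>F2 \<and> g\<in>C f}"

lemma finV: "finite V" using sg by (simp add: simple_graph_def)
lemma EV: "f \<in> E \<Longrightarrow> f \<subseteq> V" using sg by (simp add: simple_graph_def)
lemma finE: "finite E"
proof -
  have "E \<subseteq> Pow V" using EV by blast
  thus ?thesis using finite_subset[of E "Pow V"] finV by simp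
qed
lemma Eedge: "f \<in> E \<Longrightarrow> \<exists>x y. f={x,y} \<and> x\<noteq>y \<and> x\<in>V \<and> y\<in>V"
proof -
  assume f: "f \<in> E"
  hence "card f = 2" using sg unfolding simple_graph_def by blast
  then obtain x y where "f = {x,y}" "x \<noteq> y" unfolding card_2_iff by blast
  thus ?thesis using EV[OF f] by blast
qed
lemma uv: "u \<noteq> v"
proof
  assume "u = v"
  hence "card {u,v} = 1" by simp
  thus False using sg ed unfolding simple_graph_def by auto
qed
lemma uV: "u \<in> V" and vV: "v \<in> V" using EV[OF ed] by auto

lemma nbhd_V: "nbhd E w \<subseteq> V"
  unfolding nbhd_def using EV by auto

lemma Ed_img: "Ed b = (\<lambda>y. {y,b}) ` nbhd E b"
proof
  show "Ed b \<subseteq> (\<lambda>y. {y,b}) ` nbhd E b"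
  proof
    fix f assume "f \<in> Ed b"
    hence f: "f \<in> E" "b \<in> f" by (auto simp: Ed_def)
    then obtain x y where xy: "f = {x,y}" "x \<noteq> y" using Eedge by blast
    show "f \<in> (\<lambda>y. {y,b}) ` nbhd E b"
    proof (cases "b = x")
      case True
      hence "f = {y,b}" using xy by auto
      thus ?thesis using f by (auto simp: nbhd_def)
    next
      case False
      hence "f = {x,b}" using xy f by auto
      thus ?thesis using f by (auto simp: nbhd_def)
    qed
  qed
  show "(\<lambda>y. {y,b}) ` nbhd E b \<subseteq> Ed b" by (auto simp: nbhd_def Ed_def)
qed

lemma noloop: "{b,b} \<notin> E"
  using sg unfolding simple_graph_def by auto

lemma card_Ed: "card (Ed b) = degree E b"
proof -
  have "inj_on (\<lambda>y. {y,b}) (nbhd E b)"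
  proof (rule inj_onI)
    fix x y assume "x \<in> nbhd E b" "y \<in> nbhd E b" "{x,b} = {y,b}"
    thus "x = y" using noloop by (auto simp: nbhd_def doubleton_eq_iff)
  qed
  thus ?thesis unfolding Ed_img degree_def by (rule card_image)
qed

lemma finEd: "finite (Ed b)" using finE by (simp add: Ed_def)
lemma finC: "finite (C f)" using finE by (simp add: C_def)
lemma finT: "finite (T g)" using finE by (simp add: T_def)
lemma finN1: "finite N1" using finE by (simp add: N1_def edge_nbrs1_def)
lemma finF2: "finite F2" using finE by (simp add: F2_def edge_nbrs2_def)

lemma Fcard: "card (Fset E {u,v}) = card N1 + card F2"
proof -
  have "Fset E {u,v} = N1 \<union> F2" by (simp add: Fset_def N1_def F2_def)
  moreover have "N1 \<inter> F2 = {}" by (auto simp: N1_def F2_def edge_nbrs1_def edge_nbrs2_def)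
  ultimately show ?thesis using finN1 finF2 by (simp add: card_Un_disjoint)
qed

lemma N1_eq: "N1 = (Ed u \<union> Ed v) - {{u,v}}"
  by (auto simp: N1_def edge_nbrs1_def Ed_def)

lemma Ed_int: "Ed u \<inter> Ed v = {{u,v}}"
proof
  show "Ed u \<inter> Ed v \<subseteq> {{u,v}}"
  proof
    fix f assume "f \<in> Ed u \<inter> Ed v"
    hence "f \<in> E" "u \<in> f" "v \<in> f" by (auto simp: Ed_def)
    then obtain x y where "f = {x,y}" using Eedge by blast
    thus "f \<in> {{u,v}}" using \<open>u\<in>f\<close> \<open>v\<in>f\<close> uv by auto
  qed
  show "{{u,v}} \<subseteq> Ed u \<inter> Ed v" using ed by (auto simp: Ed_def)
qed

lemma card_N1: "card N1 + 2 = degree E u + degree E v"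
proof -
  have i: "card (Ed u \<inter> Ed v) = 1" unfolding Ed_int by simp
  have a: "card (Ed u \<union> Ed v) + 1 = degree E u + degree E v"
    using card_Un_Int[OF finEd finEd, of u v] card_Ed[of u] card_Ed[of v] i by linarith
  have m: "{u,v} \<in> Ed u \<union> Ed v" using ed unfolding Ed_def by blast
  have fU: "finite (Ed u \<union> Ed v)" using finEd by simp
  have "card N1 = card (Ed u \<union> Ed v) - 1" unfolding N1_eq
    using card_Diff_singleton[OF m] .
  moreover have "card (Ed u \<union> Ed v) > 0" using fU m card_gt_0_iff by auto
  ultimately have "card N1 + 1 = card (Ed u \<union> Ed v)" by linarith
  thus ?thesis using a by linarith
qed

lemma conn_C: "conn_count E {u,v} f = card (C f)"
  unfolding conn_count_def C_def by (rule refl)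

lemma F2_unf: "f \<in> F2 \<longleftrightarrow> f \<in> E \<and> f \<noteq> {u,v} \<and> f \<inter> {u,v} = {} \<and>
   (\<exists>g\<in>E. g \<inter> {u,v} \<noteq> {} \<and> g \<inter> f \<noteq> {}) \<and> card (C f) \<noteq> 1"
proof -
  have "f \<in> F2 \<longleftrightarrow> f \<in> edge_nbrs2 E {u,v} \<and> card (C f) \<noteq> 1"
    unfolding F2_def type6_def conn_C by auto
  thus ?thesis unfolding edge_nbrs2_def by simp
qed

lemma F2_iff: "f \<in> F2 \<longleftrightarrow> f \<in> E \<and> f \<inter> {u,v} = {} \<and> 2 \<le> card (C f)"
proof
  assume f: "f \<in> F2"
  hence f1: "f \<in> E" "f \<inter> {u,v} = {}" "card (C f) \<noteq> 1"
    and "\<exists>g\<in>E. g \<inter> {u,v} \<noteq> {} \<and> g \<inter> f \<noteq> {}"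
    unfolding F2_unf by blast+
  then obtain g where g: "g \<in> E" "g \<inter> {u,v} \<noteq> {}" "g \<inter> f \<noteq> {}" by blast
  then obtain a b where ab: "a \<in> g" "a \<in> {u,v}" "b \<in> g" "b \<in> f" by blast
  obtain x y where "g = {x,y}" using Eedge g(1) by blast
  moreover have "a \<noteq> b" using ab f1(2) by auto
  ultimately have "g = {a,b}" using ab by auto
  hence "g \<in> C f" using g(1) ab unfolding C_def by blast
  hence "card (C f) \<noteq> 0" using finC[of f] by (metis card_0_eq empty_iff)
  thus "f \<in> E \<and> f \<inter> {u,v} = {} \<and> 2 \<le> card (C f)" using f1 by linarith
next
  assume f: "f \<in> E \<and> f \<inter> {u,v} = {} \<and> 2 \<le> card (C f)"
  hence "C f \<noteq> {}" by auto
  then obtain g where "g \<in> C f" by blast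
  then obtain a b where "g \<in> E" "a \<in> {u,v}" "b \<in> f" "g = {a,b}" unfolding C_def by blast
  hence w: "\<exists>g\<in>E. g \<inter> {u,v} \<noteq> {} \<and> g \<inter> f \<noteq> {}" by auto
  have "f \<noteq> {u,v}" using f by auto
  thus "f \<in> F2" using f w unfolding F2_unf by simp
qed

lemma N1_mem: "g \<in> N1 \<Longrightarrow> \<exists>a b. g = {a,b} \<and> a \<in> {u,v} \<and> b \<notin> {u,v} \<and> b \<in> V \<and> g \<in> E"
proof -
  assume g: "g \<in> N1"
  hence g1: "g \<in> E" "g \<noteq> {u,v}" "g \<inter> {u,v} \<noteq> {}" by (auto simp: N1_def edge_nbrs1_def)
  then obtain x y where xy: "g = {x,y}" "x \<noteq> y" "x \<in> V" "y \<in> V" using Eedge by blast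
  show ?thesis
  proof (cases "x \<in> {u,v}")
    case True
    hence "y \<notin> {u,v}" using xy g1 by auto
    thus ?thesis using True xy g1 by blast
  next
    case False
    hence "y \<in> {u,v}" using xy g1 by auto
    thus ?thesis using False xy g1 by (metis insert_commute)
  qed
qed

lemma T_sub: "g = {a,b} \<Longrightarrow> a \<in> {u,v} \<Longrightarrow> b \<notin> {u,v} \<Longrightarrow> T g \<subseteq> Ed b - {g}"
  by (auto simp: T_def Ed_def)

lemma cardT: "g \<in> N1 \<Longrightarrow> card (T g) \<le> D - 1"
proof -
  assume "g \<in> N1"
  then obtain a b where ab: "g = {a,b}" "a \<in> {u,v}" "b \<notin> {u,v}" "b \<in> V" "g \<in> E" using N1_mem by blast
  have "card (T g) \<le> card (Ed b - {g})" using T_sub[OF ab(1-3)] finEd by (intro card_mono) auto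
  also have "\<dots> = degree E b - 1" using ab card_Ed by (simp add: Ed_def)
  also have "\<dots> \<le> D - 1" using degb[OF ab(4)] by simp
  finally show ?thesis .
qed

lemma S_sub: "S \<subseteq> Sigma N1 T"
proof
  fix p assume "p \<in> S"
  then obtain g f where p: "p = (g,f)" "f \<in> F2" "g \<in> C f" by (auto simp: S_def)
  hence f: "f \<in> E" "f \<inter> {u,v} = {}" using F2_iff by auto
  from p obtain a b where ab: "g \<in> E" "a \<in> {u,v}" "b \<in> f" "g = {a,b}" by (auto simp: C_def)
  have "g \<in> N1" using ab f by (auto simp: N1_def edge_nbrs1_def)
  moreover have "f \<in> T g" using ab f by (auto simp: T_def)
  ultimately show "p \<in> Sigma N1 T" using p by auto
qed

lemma cardS: "card S = (\<Sum>f\<in>F2. card (C f))"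
proof -
  have "S = (\<lambda>(f,g). (g,f)) ` Sigma F2 C" by (auto simp: S_def)
  moreover have "inj_on (\<lambda>(f,g). (g,f)) (Sigma F2 C)" by (auto simp: inj_on_def)
  ultimately have "card S = card (Sigma F2 C)" by (simp add: card_image)
  thus ?thesis using finF2 finC by simp
qed

lemma cardS_ge: "2 * card F2 \<le> card S"
proof -
  have "2 * card F2 = (\<Sum>f\<in>F2. 2)" by simp
  also have "\<dots> \<le> (\<Sum>f\<in>F2. card (C f))" by (rule sum_mono) (simp add: F2_iff)
  finally show ?thesis using cardS by simp
qed

lemma cardSig: "card (Sigma N1 T) = (\<Sum>g\<in>N1. card (T g))"
  using finN1 finT by simp

lemma cardSig_le: "card (Sigma N1 T) \<le> card N1 * (D - 1)"
proof -
  have "(\<Sum>g\<in>N1. card (T g)) \<le> (\<Sum>g\<in>N1. D - 1)" by (rule sum_mono) (rule cardT)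
  thus ?thesis using cardSig by simp
qed

lemma cardS_le: "card S \<le> card (Sigma N1 T)"
  using S_sub finN1 finT by (intro card_mono) auto

lemma N1_le: "card N1 \<le> 2 * (D - 1)"
  using card_N1 degb[OF uV] degb[OF vV] by simp


lemma v_nb_u: "v \<in> nbhd E u" and u_nb_v: "u \<in> nbhd E v"
  using ed by (auto simp: nbhd_def insert_commute)

lemma deg_u_pos: "1 \<le> degree E u"
proof -
  have "finite (nbhd E u)" using finite_subset[OF nbhd_V finV] .
  thus ?thesis using v_nb_u unfolding degree_def by (metis One_nat_def Suc_leI card_gt_0_iff empty_iff)
qed

lemma D_pos: "1 \<le> D" using deg_u_pos degb[OF uV] by linarith

lemma main_ineq: "2 * card F2 \<le> card N1 * (D - 1)"
  using cardS_ge cardS_le cardSig_le by linarith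

lemma arith1:
  fixes n1 f2 k :: nat
  assumes "n1 \<le> 2*k" "2*f2 \<le> n1*k" "n1 + f2 = k*k+2*k"
  shows "n1 = 2*k \<and> 2*f2 = n1*k"
proof -
  have "2*k*(k+2) = 2*(n1+f2)" using assms(3) by (simp add: algebra_simps)
  also have "\<dots> \<le> n1*(k+2)" using assms(2) by (simp add: algebra_simps)
  finally have h: "(2*k)*(k+2) \<le> n1*(k+2)" .
  hence "2*k \<le> n1" using mult_le_cancel2[of "2*k" "k+2" n1] by linarith
  hence n: "n1 = 2*k" using assms(1) by simp
  hence "2*f2 = 2*(k*k)" using assms(3) by simp
  thus ?thesis using n by (simp add: algebra_simps)
qed

lemma T_Ed: "{a,b} \<in> E \<Longrightarrow> a \<in> {u,v} \<Longrightarrow> b \<notin> {u,v} \<Longrightarrow> {a,b} \<in> N1"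
  by (auto simp: N1_def edge_nbrs1_def)


lemma forward:
  assumes eq: "card N1 + card F2 = D^2 - 1" and conn: "connected_graph V E"
  shows "family_G D V E"
proof -
  define k where "k = D - 1"
  have Dk: "D = k + 1" using D_pos k_def by simp
  have n1le: "card N1 \<le> 2*k" using N1_le k_def by simp
  have m: "2 * card F2 \<le> card N1 * k" using main_ineq k_def by simp
  have "card N1 + card F2 = k*k + 2*k" using eq Dk by (simp add: power2_eq_square algebra_simps)
  from arith1[OF n1le m this] have n1: "card N1 = 2*k" and f2: "2 * card F2 = card N1 * k" by auto
  have cS: "card S = card (Sigma N1 T)"
    using cardS_ge cardS_le cardSig_le f2 unfolding k_def by linarith
  have finSig: "finite (Sigma N1 T)" using finN1 finT by simp
  have SeqSig: "S = Sigma N1 T" using card_subset_eq[OF finSig S_sub cS] .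
  have sumeq: "(\<Sum>g\<in>N1. card (T g)) = (\<Sum>g\<in>N1. k)"
  proof -
    have "card S = card N1 * k" using cardS_ge cardS_le cardSig_le f2 unfolding k_def by linarith
    thus ?thesis using cS cardSig by simp
  qed
  have cT: "card (T g) = k" if "g \<in> N1" for g
    using sum_mono_inv[OF sumeq _ that finN1] cardT k_def by auto
  have du: "degree E u = D" and dv: "degree E v = D"
    using card_N1 n1 degb[OF uV] degb[OF vV] Dk by linarith+
  have key: "degree E b = D \<and> T {a,b} = Ed b - {{a,b}}"
    if ab: "{a,b} \<in> E" "a \<in> {u,v}" "b \<notin> {u,v}" for a b
  proof -
    have g: "{a,b} \<in> N1" using T_Ed[OF ab] .
    have bV: "b \<in> V" using EV[OF ab(1)] by auto
    have sub: "T {a,b} \<subseteq> Ed b - {{a,b}}" using T_sub[OF refl ab(2,3)] .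
    have c2: "card (Ed b - {{a,b}}) = degree E b - 1"
      using card_Ed[of b] ab(1) by (simp add: Ed_def)
    have "k \<le> card (Ed b - {{a,b}})" using cT[OF g] sub finEd by (metis card_mono finite_Diff)
    moreover have "{a,b} \<in> Ed b" using ab(1) by (simp add: Ed_def)
    hence "card (Ed b) \<noteq> 0" using finEd[of b] by auto
    ultimately have "degree E b = D" using c2 degb[OF bV] Dk card_Ed[of b] by linarith
    moreover have "card (T {a,b}) = card (Ed b - {{a,b}})" using cT[OF g] c2 \<open>degree E b = D\<close> Dk by simp
    hence "T {a,b} = Ed b - {{a,b}}" using card_subset_eq[OF _ sub] finEd by simp
    ultimately show ?thesis by blast
  qed
  have noboth: "\<not> ({u,b} \<in> E \<and> {v,b} \<in> E)" if b: "b \<notin> {u,v}" for b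
  proof
    assume h: "{u,b} \<in> E \<and> {v,b} \<in> E"
    have "{v,b} \<noteq> {u,b}" using b uv by (auto simp: doubleton_eq_iff)
    hence "{v,b} \<in> Ed b - {{u,b}}" using h by (auto simp: Ed_def)
    hence "{v,b} \<in> T {u,b}" using key[of u b] h b by simp
    thus False by (auto simp: T_def)
  qed
  have clos: "y \<in> nbhd E u \<union> nbhd E v"
    if ab: "{a,b} \<in> E" "a \<in> {u,v}" "b \<notin> {u,v}" and by': "{b,y} \<in> E" and y: "y \<notin> {u,v}" for a b y
  proof -
    have fne: "{b,y} \<noteq> {a,b}" using ab y by (auto simp: doubleton_eq_iff)
    hence "{b,y} \<in> Ed b - {{a,b}}" using by' by (auto simp: Ed_def)
    hence "{b,y} \<in> T {a,b}" using key[OF ab] by simp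
    hence "({a,b},{b,y}) \<in> S" using SeqSig T_Ed[OF ab] by simp
    hence "{b,y} \<in> F2" by (simp add: S_def)
    hence c: "2 \<le> card (C {b,y})" using F2_iff by simp
    have "C {b,y} - {{a,b}} \<noteq> {}"
    proof
      assume "C {b,y} - {{a,b}} = {}"
      hence "C {b,y} \<subseteq> {{a,b}}" by blast
      hence "card (C {b,y}) \<le> card {{a,b}}" by (intro card_mono) auto
      hence "card (C {b,y}) \<le> 1" by simp
      thus False using c by simp
    qed
    then obtain g' where g': "g' \<in> C {b,y}" "g' \<noteq> {a,b}" by blast
    then obtain a' b' where a'b': "g' \<in> E" "a' \<in> {u,v}" "b' \<in> {b,y}" "g' = {a',b'}" unfolding C_def by blast
    show ?thesis
    proof (cases "b' = y")
      case True
      thus ?thesis using a'b' by (auto simp: nbhd_def insert_commute)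
    next
      case False
      hence "b' = b" using a'b' by simp
      hence "a' \<noteq> a" using g' a'b' by auto
      hence "{u,b} \<in> E \<and> {v,b} \<in> E" using a'b' ab \<open>b' = b\<close> by auto
      thus ?thesis using noboth[OF ab(3)] by blast
    qed
  qed
  define R where "R = nbhd E u \<union> nbhd E v"
  have uR: "u \<in> R" and vR: "v \<in> R" using u_nb_v v_nb_u R_def by auto
  have step: "y \<in> R" if x: "x \<in> R" and a: "adj E x y" for x y
  proof (cases "y \<in> {u,v}")
    case True thus ?thesis using uR vR by auto
  next
    case yn: False
    show ?thesis
    proof (cases "x \<in> {u,v}")
      case True
      thus ?thesis using a by (auto simp: adj_def R_def nbhd_def insert_commute)
    next
      case False
      from x obtain a where "a \<in> {u,v}" "{x,a} \<in> E" unfolding R_def nbhd_def by auto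
      hence "{a,x} \<in> E" by (simp add: insert_commute)
      thus ?thesis using clos[OF _ \<open>a \<in> {u,v}\<close> False _ yn] a by (auto simp: adj_def R_def)
    qed
  qed
  have "w \<in> R" if "w \<in> V" for w
  proof -
    have "(adj E)\<^sup>*\<^sup>* u w" using conn uV that by (simp add: connected_graph_def)
    thus ?thesis
    proof (induction rule: rtranclp_induct)
      case base thus ?case using uR .
    next
      case (step y z) thus ?case using \<open>\<And>x y. x \<in> R \<Longrightarrow> adj E x y \<Longrightarrow> y \<in> R\<close> by blast
    qed
  qed
  hence VR: "V = R" using nbhd_V R_def by auto
  have disj: "nbhd E u \<inter> nbhd E v = {}"
  proof (rule ccontr)
    assume "nbhd E u \<inter> nbhd E v \<noteq> {}"
    then obtain b where "{b,u} \<in> E" "{b,v} \<in> E" by (auto simp: nbhd_def)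
    moreover have "b \<notin> {u,v}" using calculation noloop by auto
    ultimately show False using noboth by (simp add: insert_commute)
  qed
  have finN: "finite (nbhd E w)" for w using finite_subset[OF nbhd_V finV] .
  have cV: "card V = 2*D" using VR R_def disj du dv card_Un_disjoint[OF finN finN disj]
    by (simp add: degree_def)
  have alldeg: "degree E w = D" if "w \<in> V" for w
  proof (cases "w \<in> {u,v}")
    case True thus ?thesis using du dv by auto
  next
    case False
    from that VR obtain a where "a \<in> {u,v}" "{w,a} \<in> E" unfolding R_def nbhd_def by auto
    hence "{a,w} \<in> E" by (simp add: insert_commute)
    thus ?thesis using key[OF _ \<open>a \<in> {u,v}\<close> False] by blast
  qed
  show ?thesis unfolding family_G_def
    using D_pos sg alldeg cV ed VR R_def by auto
qed


lemma backward:
  assumes alldeg: "\<forall>w\<in>V. degree E w = D" and cV: "card V = 2*D"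
    and cov: "nbhd E u \<union> nbhd E v = V"
  shows "card N1 + card F2 = D^2 - 1"
proof -
  have finN: "finite (nbhd E w)" for w using finite_subset[OF nbhd_V finV] .
  have "card (nbhd E u) + card (nbhd E v) = card V + card (nbhd E u \<inter> nbhd E v)"
    using card_Un_Int[OF finN finN, of u v] cov by simp
  hence "card (nbhd E u \<inter> nbhd E v) = 0" using alldeg uV vV cV by (simp add: degree_def)
  hence disj: "nbhd E u \<inter> nbhd E v = {}" using finN by simp
  have noboth: "\<not> ({u,b} \<in> E \<and> {v,b} \<in> E)" for b
    using disj by (auto simp: nbhd_def insert_commute)
  have n1: "card N1 = 2*(D-1)" using card_N1 alldeg uV vV by simp
  have Teq: "T {a,b} = Ed b - {{a,b}}" if ab: "{a,b} \<in> E" "a \<in> {u,v}" "b \<notin> {u,v}" for a b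
  proof
    show "T {a,b} \<subseteq> Ed b - {{a,b}}" using T_sub[OF refl ab(2,3)] .
    show "Ed b - {{a,b}} \<subseteq> T {a,b}"
    proof
      fix f assume f: "f \<in> Ed b - {{a,b}}"
      hence fE: "f \<in> E" "b \<in> f" "f \<noteq> {a,b}" by (auto simp: Ed_def)
      then obtain x y where "f = {x,y}" "x \<noteq> y" using Eedge by blast
      then obtain z where z: "f = {b,z}" using fE(2) by auto
      have "z \<noteq> a" using z fE(3) by (auto simp: insert_commute)
      moreover have "z \<notin> {u,v} - {a}"
      proof
        assume zz: "z \<in> {u,v} - {a}"
        hence "{u,v} = {a,z}" using ab(2) by auto
        hence "{u,b} \<in> E \<and> {v,b} \<in> E" using ab(1) fE(1) z by (auto simp: insert_commute doubleton_eq_iff)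
        thus False using noboth by blast
      qed
      ultimately have "z \<notin> {u,v}" by blast
      hence "f \<inter> {u,v} = {}" using z ab(3) by auto
      thus "f \<in> T {a,b}" using fE z by (auto simp: T_def)
    qed
  qed
  have cT: "card (T g) = D - 1" if g: "g \<in> N1" for g
  proof -
    obtain a b where ab: "g = {a,b}" "a \<in> {u,v}" "b \<notin> {u,v}" "b \<in> V" "g \<in> E" using N1_mem[OF g] by blast
    have "card (T g) = card (Ed b - {g})" using Teq ab by simp
    also have "\<dots> = degree E b - 1" using card_Ed[of b] ab by (simp add: Ed_def)
    finally show ?thesis using alldeg ab by simp
  qed
  have Sig_sub: "Sigma N1 T \<subseteq> S"
  proof
    fix p assume "p \<in> Sigma N1 T"
    then obtain g f where p: "p = (g,f)" "g \<in> N1" "f \<in> T g" by blast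
    obtain a b where ab: "g = {a,b}" "a \<in> {u,v}" "b \<notin> {u,v}" "b \<in> V" "g \<in> E" using N1_mem[OF p(2)] by blast
    have f: "f \<in> E" "f \<inter> {u,v} = {}" "b \<in> f" using p(3) ab by (auto simp: T_def)
    then obtain x y where "f = {x,y}" "x \<noteq> y" using Eedge by blast
    then obtain z where z: "f = {b,z}" "z \<noteq> b" using f(3) by auto
    have zn: "z \<notin> {u,v}" using f(2) z by auto
    have "z \<in> V" using EV[OF f(1)] z by auto
    hence "z \<in> nbhd E u \<or> z \<in> nbhd E v" using cov by blast
    hence "{u,z} \<in> E \<or> {v,z} \<in> E" unfolding nbhd_def by (auto simp: insert_commute)
    then obtain a' where a': "a' \<in> {u,v}" "{a',z} \<in> E" by blast
    have gC: "g \<in> C f" using ab z by (auto simp: C_def)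
    have g'C: "{a',z} \<in> C f" using a' z by (auto simp: C_def)
    have ne: "{a',z} \<noteq> g" using ab z zn a' by (auto simp: doubleton_eq_iff)
    have "card {g, {a',z}} \<le> card (C f)" using gC g'C finC by (intro card_mono) auto
    hence "2 \<le> card (C f)" using ne by simp
    hence "f \<in> F2" using F2_iff f by simp
    thus "p \<in> S" using p gC by (simp add: S_def)
  qed
  have C2: "card (C f) \<le> 2" if f: "f \<in> F2" for f
  proof -
    have fE: "f \<in> E" "f \<inter> {u,v} = {}" using f F2_iff by auto
    then obtain x y where xy: "f = {x,y}" using Eedge by blast
    have inj: "inj_on (\<lambda>g. g \<inter> f) (C f)"
    proof (rule inj_onI)
      fix g1 g2 assume g1: "g1 \<in> C f" and g2: "g2 \<in> C f" and eq: "g1 \<inter> f = g2 \<inter> f"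
      from g1 obtain a1 b1 where 1: "g1 \<in> E" "a1 \<in> {u,v}" "b1 \<in> f" "g1 = {a1,b1}" unfolding C_def by blast
      from g2 obtain a2 b2 where 2: "g2 \<in> E" "a2 \<in> {u,v}" "b2 \<in> f" "g2 = {a2,b2}" unfolding C_def by blast
      have "a1 \<notin> f" "a2 \<notin> f" using 1 2 fE(2) by auto
      hence "g1 \<inter> f = {b1}" "g2 \<inter> f = {b2}" using 1 2 by auto
      hence b: "b1 = b2" using eq by simp
      show "g1 = g2"
      proof (rule ccontr)
        assume "g1 \<noteq> g2"
        hence "a1 \<noteq> a2" using 1 2 b by auto
        hence "{u,b1} \<in> E \<and> {v,b1} \<in> E" using 1 2 b by (auto simp: insert_commute)
        thus False using noboth by blast
      qed
    qed
    have "(\<lambda>g. g \<inter> f) ` C f \<subseteq> {{x},{y}}"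
    proof
      fix h assume "h \<in> (\<lambda>g. g \<inter> f) ` C f"
      then obtain g where g: "g \<in> C f" "h = g \<inter> f" by blast
      from g obtain a b where 1: "a \<in> {u,v}" "b \<in> f" "g = {a,b}" unfolding C_def by blast
      have "a \<notin> f" using 1 fE(2) by auto
      hence "h = {b}" using 1 g by auto
      thus "h \<in> {{x},{y}}" using 1 xy by auto
    qed
    hence "card ((\<lambda>g. g \<inter> f) ` C f) \<le> card {{x},{y}}" by (intro card_mono) auto
    also have "\<dots> \<le> 2" by (simp add: card_insert_if)
    finally show ?thesis using card_image[OF inj] by simp
  qed
  have "card S \<le> 2 * card F2"
  proof -
    have "card S = (\<Sum>f\<in>F2. card (C f))" by (rule cardS)
    also have "\<dots> \<le> (\<Sum>f\<in>F2. 2)" by (rule sum_mono) (rule C2)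
    finally show ?thesis by simp
  qed
  moreover have "card (Sigma N1 T) \<le> card S"
  proof -
    have "finite (Sigma N1 T)" using finN1 finT by simp
    hence "finite S" using finite_subset[OF S_sub] by blast
    thus ?thesis using Sig_sub by (rule card_mono)
  qed
  moreover have "card (Sigma N1 T) = card N1 * (D - 1)" using cardSig cT by simp
  ultimately have lo: "card N1 * (D-1) \<le> 2 * card F2" by linarith
  have up: "2 * card F2 \<le> card N1 * (D-1)" by (rule main_ineq)
  define k where "k = D - 1"
  have Dk: "D = k + 1" using D_pos k_def by simp
  have "2 * card F2 = 2 * (k*k)" using lo up n1 unfolding k_def by simp
  hence "card F2 = k*k" by simp
  moreover have "card N1 = 2*k" using n1 k_def by simp
  moreover have "D^2 - 1 = k*k + 2*k" using Dk by (simp add: power2_eq_square algebra_simps)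
  ultimately show ?thesis by linarith
qed

end

lemma maxdeg_ge:
  assumes "finite V" "w \<in> V" shows "degree E w \<le> max_degree V E"
  unfolding max_degree_def using assms by (intro Max_ge) auto

theorem lemma3:
  fixes V :: "'a set" and E :: "'a set set"
  assumes "simple_graph V E" and "connected_graph V E"
  shows "(\<exists>e\<in>E. int (card (Fset E e)) = int (max_degree V E) ^ 2 - 1)
         \<longleftrightarrow> family_G (max_degree V E) V E"
proof
  have finV: "finite V" using assms(1) by (simp add: simple_graph_def)
  have degb: "\<And>w. w \<in> V \<Longrightarrow> degree E w \<le> max_degree V E" using maxdeg_ge[OF finV] .
  assume "\<exists>e\<in>E. int (card (Fset E e)) = int (max_degree V E) ^ 2 - 1"
  then obtain e where e: "e \<in> E" "int (card (Fset E e)) = int (max_degree V E) ^ 2 - 1" by blast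
  have "card e = 2" using assms(1) e(1) by (simp add: simple_graph_def)
  then obtain u v where huv: "e = {u,v}" unfolding card_2_iff by blast
  interpret L V E u v "max_degree V E"
    using assms(1) e(1) huv degb by unfold_locales auto
  have "1 \<le> max_degree V E" by (rule D_pos)
  hence "int (max_degree V E) ^ 2 - 1 = int (max_degree V E ^ 2 - 1)"
    by (simp add: of_nat_diff)
  hence "card (Fset E e) = max_degree V E ^ 2 - 1" using e(2) by simp
  hence "card N1 + card F2 = max_degree V E ^ 2 - 1" using Fcard huv by simp
  thus "family_G (max_degree V E) V E" using forward assms(2) by blast
next
  have finV: "finite V" using assms(1) by (simp add: simple_graph_def)
  have degb: "\<And>w. w \<in> V \<Longrightarrow> degree E w \<le> max_degree V E" using maxdeg_ge[OF finV] .
  assume fG: "family_G (max_degree V E) V E"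
  then obtain u v where huv: "{u,v} \<in> E" "nbhd E u \<union> nbhd E v = V" by (auto simp: family_G_def)
  interpret L V E u v "max_degree V E"
    using assms(1) huv degb by unfold_locales auto
  have "card N1 + card F2 = max_degree V E ^ 2 - 1"
    using backward fG huv(2) by (auto simp: family_G_def)
  moreover have "1 \<le> max_degree V E" by (rule D_pos)
  hence "int (max_degree V E) ^ 2 - 1 = int (max_degree V E ^ 2 - 1)"
    by (simp add: of_nat_diff)
  ultimately show "\<exists>e\<in>E. int (card (Fset E e)) = int (max_degree V E) ^ 2 - 1"
    using huv(1) Fcard by (intro bexI[of _ "{u,v}"]) auto
qed

end
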